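(* Let $\mathfrak m$ be an infinite cardinal with $\sup\{\mathfrak m^{\mathfrak n}:\mathfrak n<\mathfrak m\}=\mathfrak m$, and let $G$ be a subgroup of $\mathrm{Iso}(\mathbb U_{\mathfrak m})$ of density $<\mathfrak m$. Then the sets $V[x;\varepsilon]\cap G$, where $x\in\mathbb U_{\mathfrak m}$ and $\varepsilon>0$, form a neighbourhood base at the identity of $G$.
   Context: For an infinite cardinal $\mathfrak m$ satisfying $\sup\{\mathfrak m^{\mathfrak n}:\mathfrak n<\mathfrak m\}=\mathfrak m$, $\mathbb U_{\mathfrak m}$ denotes the Urysohn–Katětov space of weight $\mathfrak m$: the (unique up to isometry) complete metric space of density $\mathfrak m$ that contains an isometric copy of every metric space of weight $\le\mathfrak m$ and is $\mathfrak m$-homogeneous (every isometry between two subsets of cardinality $<\mathfrak m$ extends to an isometry of $\mathbb U_{\mathfrak m}$ onto itself). $\mathrm{Iso}(\mathbb U_{\mathfrak m})$ is its isometry group with the topology of pointwise convergence, and $V[x;\varepsilon]=\{g\in\mathrm{Iso}(\mathbb U_{\mathfrak m}) : d(x,gx)<\varepsilon\}$. *)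

theory Defs
  imports "HOL-Analysis.Analysis"
begin

text \<open>Cardinals are represented by sets; card_of A is the cardinal of A.\<close>

text \<open>The cardinal hypothesis: for every cardinal n < m, m^n \<le> m
  (equivalently sup of m^n over n < m equals m, as m^1 = m).\<close>
definition cardinal_hyp :: "'m set \<Rightarrow> bool" where
  "cardinal_hyp M \<longleftrightarrow> infinite M \<and>
     (\<forall>N::'m set. (card_of N, card_of M) \<in> ordLess \<longrightarrow>
        (card_of (Func N M), card_of M) \<in> ordLeq)"

definition weight_le :: "'a metric \<Rightarrow> 'm set \<Rightarrow> bool" where
  "weight_le X M \<longleftrightarrow> (\<exists>B. (\<forall>b\<in>B. openin (mtopology_of X) b) \<and>
      (\<forall>W. openin (mtopology_of X) W \<longrightarrow> (\<exists>B'\<subseteq>B. \<Union>B' = W)) \<and>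
      (card_of B, card_of M) \<in> ordLeq)"

definition Iso :: "('a::metric_space \<Rightarrow> 'a) set" where
  "Iso = {g. bij g \<and> (\<forall>x y. dist (g x) (g y) = dist x y)}"

definition Vnb :: "'a::metric_space \<Rightarrow> real \<Rightarrow> ('a \<Rightarrow> 'a) set" where
  "Vnb x e = {g \<in> Iso. dist x (g x) < e}"

definition iso_subgroup :: "('a::metric_space \<Rightarrow> 'a) set \<Rightarrow> bool" where
  "iso_subgroup G \<longleftrightarrow> G \<subseteq> Iso \<and> id \<in> G \<and> (\<forall>g\<in>G. \<forall>h\<in>G. g \<circ> h \<in> G)
     \<and> (\<forall>g\<in>G. inv g \<in> G)"

text \<open>The type 'a (with its metric) is the Urysohn-Katetov space of weight m:
  complete, density exactly m, universal for metric spaces of weight \<le> m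
  (carried on subsets of 'a), and m-homogeneous.\<close>
definition urysohn_katetov :: "'m set \<Rightarrow> 'a::complete_space itself \<Rightarrow> bool" where
  "urysohn_katetov M _ \<longleftrightarrow>
     (\<exists>D::'a set. closure D = UNIV \<and> (card_of D, card_of M) \<in> ordIso) \<and>
     (\<forall>D::'a set. closure D = UNIV \<longrightarrow> (card_of M, card_of D) \<in> ordLeq) \<and>
     (\<forall>X::'a metric. weight_le X M \<longrightarrow>
        (\<exists>f::'a \<Rightarrow> 'a. \<forall>x\<in>mspace X. \<forall>y\<in>mspace X. dist (f x) (f y) = mdist X x y)) \<and>
     (\<forall>(A::'a set) (f::'a \<Rightarrow> 'a). (card_of A, card_of M) \<in> ordLess \<longrightarrow>
        (\<forall>x\<in>A. \<forall>y\<in>A. dist (f x) (f y) = dist x y) \<longrightarrow>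
        (\<exists>g\<in>Iso. \<forall>x\<in>A. g x = f x))"

end

theory Submission
  imports Defs
begin
unbundle cardinal_syntax

lemma card_finite_less:
  assumes "finite A" "infinite C" shows "|A| <o |C|"
  using assms finite_ordLess_infinite[of "|A|" "|C|"] by (simp add: Field_card_of card_of_well_order_on)

lemma realize:
  fixes M :: "'m set" and T :: "'a::complete_space set" and f :: "'a \<Rightarrow> real"
  assumes uk: "urysohn_katetov M TYPE('a)" and inf: "infinite M"
    and Tc: "|T| <o |M|"
    and fpos: "\<forall>z\<in>T. f z > 0"
    and flip: "\<forall>z\<in>T. \<forall>w\<in>T. f z \<le> f w + dist z w"
    and ftri: "\<forall>z\<in>T. \<forall>w\<in>T. dist z w \<le> f z + f w"
  shows "\<exists>x. \<forall>z\<in>T. dist x z = f z"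
proof -
  from uk obtain D0 :: "'a set" where D0: "|D0| =o |M|" unfolding urysohn_katetov_def by blast
  have "T \<noteq> UNIV"
  proof
    assume "T = UNIV"
    then have "|D0| \<le>o |T|" by (simp add: card_of_mono1)
    then have "|D0| <o |M|" using Tc ordLeq_ordLess_trans by blast
    then have "|D0| <o |D0|" using D0 ordLess_ordIso_trans ordIso_symmetric by blast
    then show False using ordLess_irreflexive by blast
  qed
  then obtain p where pT: "p \<notin> T" by blast
  define S where "S = insert p T"
  define d where "d a b = (if a = p then (if b = p then 0 else \<bar>f b\<bar>) else if b = p then \<bar>f a\<bar> else dist a b)" for a b
  have fabs: "\<And>z. z \<in> T \<Longrightarrow> \<bar>f z\<bar> = f z" using fpos by force
  have MS: "Metric_space S d"
  proof
    fix x y show "0 \<le> d x y"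
      by (auto simp: S_def d_def)
  next
    fix x y show "d x y = d y x"
      by (auto simp: S_def d_def dist_commute)
  next
    fix x y assume "x \<in> S" "y \<in> S" then show "d x y = 0 \<longleftrightarrow> x = y"
      using fpos pT by (auto simp: S_def d_def)
  next
    fix x y z assume "x \<in> S" "y \<in> S" "z \<in> S" then show "d x z \<le> d x y + d y z"
      using fpos pT flip ftri
      apply (simp add: S_def d_def)
      apply (elim disjE)
      apply (auto simp: fabs intro: dist_triangle)
      apply (metis dist_commute add.commute)+
      done
  qed
  define X where "X = metric (S, d)"
  interpret MS: Metric_space S d by (rule MS)
  have sX: "mspace X = S" and dX: "mdist X = d" by (simp_all add: X_def)
  have topX: "mtopology_of X = MS.mtopology" by (simp add: X_def)
  have ST: "|S| <o |M|"
  proof -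
    have "|{p} \<union> T| <o |M|"
      using card_of_Un_ordLess_infinite[of M "{p}" T] card_finite_less[of "{p}" M] inf Tc by simp
    then show ?thesis by (simp add: S_def)
  qed
  define B where "B = (\<lambda>(a,n). MS.mball a (1 / Suc n)) ` (S \<times> (UNIV::nat set))"
  have wl: "weight_le X M"
    unfolding weight_le_def topX
  proof (rule exI[of _ B], intro conjI allI impI ballI)
    fix b assume "b \<in> B" then show "openin MS.mtopology b"
      by (auto simp: B_def)
  next
    fix W assume W: "openin MS.mtopology W"
    show "\<exists>B'\<subseteq>B. \<Union>B' = W"
    proof (intro exI conjI)
      show "{b\<in>B. b \<subseteq> W} \<subseteq> B" by auto
      show "\<Union>{b\<in>B. b \<subseteq> W} = W"
      proof
        show "\<Union>{b\<in>B. b \<subseteq> W} \<subseteq> W" by auto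
        show "W \<subseteq> \<Union>{b\<in>B. b \<subseteq> W}"
        proof
          fix x assume "x \<in> W"
          with W obtain r where r: "r > 0" "MS.mball x r \<subseteq> W" "x \<in> S"
            unfolding MS.openin_mtopology by blast
          obtain n::nat where n: "inverse (real (Suc n)) < r" using reals_Archimedean r(1) by blast
          have "MS.mball x (1 / Suc n) \<in> B" using r(3) by (auto simp: B_def)
          moreover have "MS.mball x (1/Suc n) \<subseteq> W" using r n
            using MS.mball_subset_concentric[of "1/Suc n" r x] by (simp add: inverse_eq_divide)
          moreover have "x \<in> MS.mball x (1/Suc n)" using r(3) by simp
          ultimately show "x \<in> \<Union>{b\<in>B. b \<subseteq> W}" by blast
        qed
      qed
    qed
  next
    have "|B| \<le>o |S \<times> (UNIV::nat set)|" unfolding B_def by (rule card_of_image)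
    moreover have "|S \<times> (UNIV::nat set)| \<le>o |M|"
    proof (rule card_of_Times_ordLeq_infinite_Field)
      show "infinite (Field (card_of M))" using inf by (simp add: Field_card_of)
      show "|S| \<le>o |M|" using ST by (rule ordLess_imp_ordLeq)
      show "|UNIV::nat set| \<le>o |M|" using inf infinite_iff_card_of_nat by blast
      show "Card_order |M|" by (rule card_of_Card_order)
    qed
    ultimately show "|B| \<le>o |M|" using ordLeq_transitive by blast
  qed
  note U = uk[unfolded urysohn_katetov_def, THEN conjunct2, THEN conjunct2, THEN conjunct1, rule_format]
  note H = uk[unfolded urysohn_katetov_def, THEN conjunct2, THEN conjunct2, THEN conjunct2, rule_format]
  obtain \<phi> :: "'a \<Rightarrow> 'a" where
    \<phi>: "\<forall>a\<in>S. \<forall>b\<in>S. dist (\<phi> a) (\<phi> b) = d a b"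
    using U[OF wl] unfolding sX dX by blast
  have dT: "\<And>z w. z \<in> T \<Longrightarrow> w \<in> T \<Longrightarrow> d z w = dist z w" using pT by (auto simp: d_def)
  have injT: "inj_on \<phi> T"
  proof (rule inj_onI)
    fix z w assume zw: "z \<in> T" "w \<in> T" "\<phi> z = \<phi> w"
    have "z \<in> S" "w \<in> S" using zw by (auto simp: S_def)
    then have "d z w = dist (\<phi> z) (\<phi> w)" using \<phi> by simp
    then have "d z w = 0" using zw by simp
    then show "z = w" using zw dT by simp
  qed
  define A where "A = \<phi> ` T"
  define \<psi> where "\<psi> = inv_into T \<phi>"
  have Ac: "|A| <o |M|" unfolding A_def using card_of_image Tc ordLeq_ordLess_trans by blast
  have psi: "\<And>z. z \<in> T \<Longrightarrow> \<psi> (\<phi> z) = z" unfolding \<psi>_def using injT by simp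
  have iso: "\<forall>a\<in>A. \<forall>b\<in>A. dist (\<psi> a) (\<psi> b) = dist a b"
  proof (intro ballI)
    fix a b assume "a \<in> A" "b \<in> A"
    then obtain z w where "z \<in> T" "w \<in> T" "a = \<phi> z" "b = \<phi> w" unfolding A_def by blast
    then show "dist (\<psi> a) (\<psi> b) = dist a b" using psi \<phi> dT by (simp add: S_def)
  qed
  obtain g where g: "g \<in> Iso" "\<forall>a\<in>A. g a = \<psi> a"
  proof -
    have "\<exists>g\<in>Iso. \<forall>x\<in>A. g x = \<psi> x" by (rule H[OF Ac]) (use iso in blast)
    then show ?thesis using that by blast
  qed
  show ?thesis
  proof (intro exI ballI)
    fix z assume z: "z \<in> T"
    have "dist (g (\<phi> p)) z = dist (g (\<phi> p)) (g (\<phi> z))" using g psi z by (simp add: A_def)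
    also have "\<dots> = dist (\<phi> p) (\<phi> z)" using g(1) by (simp add: Iso_def)
    also have "\<dots> = d p z" using \<phi> z by (simp add: S_def)
    also have "\<dots> = f z" using z pT fabs by (auto simp: d_def)
    finally show "dist (g (\<phi> p)) z = f z" .
  qed
qed

lemma open_nbhd_id:
  fixes G :: "('a::metric_space \<Rightarrow> 'a) set"
  assumes "openin (top_of_set G) W" "id \<in> W"
  shows "\<exists>F e. finite F \<and> e > 0 \<and> (\<forall>g\<in>G. (\<forall>y\<in>F. dist (g y) y < e) \<longrightarrow> g \<in> W)"
proof -
  obtain U where U: "open U" "W = G \<inter> U" using assms(1) by (auto simp: openin_open)
  then have "id \<in> U" using assms by auto
  with U(1) obtain V where V: "finite {i. V i \<noteq> UNIV}" "\<forall>i. open (V i)" "id \<in> PiE UNIV V" "PiE UNIV V \<subseteq> U"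
    unfolding open_fun_def openin_product_topology_alt by force
  define F where "F = {i. V i \<noteq> UNIV}"
  have "\<forall>i. \<exists>e>0. ball i e \<subseteq> V i"
  proof
    fix i
    have "i \<in> V i" using V(3) by (auto simp: PiE_def Pi_def)
    then show "\<exists>e>0. ball i e \<subseteq> V i" using V(2) open_contains_ball by blast
  qed
  then obtain ee where ee: "\<forall>i. ee i > 0 \<and> ball i (ee i) \<subseteq> V i" by metis
  define e where "e = Min (insert 1 (ee ` F))"
  have fin: "finite (insert 1 (ee ` F))" using V(1) by (simp add: F_def)
  have epos: "e > 0" unfolding e_def using fin ee by (auto simp: Min_gr_iff)
  have ele: "\<And>i. i \<in> F \<Longrightarrow> e \<le> ee i" unfolding e_def using fin by (intro Min_le) auto
  show ?thesis
  proof (intro exI conjI ballI impI)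
    show "finite F" using V(1) by (simp add: F_def)
    show "e > 0" by (rule epos)
    fix g assume g: "g \<in> G" "\<forall>y\<in>F. dist (g y) y < e"
    have "g \<in> PiE UNIV V"
    proof (unfold PiE_UNIV_domain, rule Pi_I)
      fix i assume "i \<in> (UNIV::'a set)"
      show "g i \<in> V i"
      proof (cases "i \<in> F")
        case True
        then have "dist i (g i) < ee i" using g(2) ele[OF True] True by (fastforce simp: dist_commute)
        then have "g i \<in> ball i (ee i)" by simp
        then show ?thesis using ee by blast
      next
        case False then show ?thesis by (simp add: F_def)
      qed
    qed
    then show "g \<in> W" using V(4) U(2) g(1) by auto
  qed
qed

lemma dense_approx:
  fixes g :: "'a::metric_space \<Rightarrow> 'a"
  assumes "g \<in> closure D" "finite F" "\<delta> > 0"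
  shows "\<exists>h\<in>D. \<forall>y\<in>F. dist (h y) (g y) < \<delta>"
proof -
  have o: "open {f. \<forall>i\<in>F. f (id i) \<in> ball (g i) \<delta>}"
    by (rule product_topology_basis') (auto simp: assms)
  have "g \<in> {f. \<forall>i\<in>F. f (id i) \<in> ball (g i) \<delta>}" using assms by auto
  then have "{f. \<forall>i\<in>F. f (id i) \<in> ball (g i) \<delta>} \<inter> closure D \<noteq> {}" using assms(1) by blast
  then have "{f. \<forall>i\<in>F. f (id i) \<in> ball (g i) \<delta>} \<inter> D \<noteq> {}" using open_Int_closure_eq_empty[OF o] by blast
  then show ?thesis by (auto simp: dist_commute)
qed

lemma finite_UN_less:
  assumes "finite I" "infinite C" "\<forall>i\<in>I. |A i| <o |C|"
  shows "|\<Union>i\<in>I. A i| <o |C|"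
  using assms
proof (induction I rule: finite_induct)
  case empty
  then show ?case using card_finite_less[of "{}" C] by simp
next
  case (insert x I)
  then show ?case using card_of_Un_ordLess_infinite[of C "A x" "\<Union>i\<in>I. A i"] by simp
qed


theorem lemma4p4p1:
  fixes M :: "'m set" and G :: "('a::complete_space \<Rightarrow> 'a) set"
  assumes "cardinal_hyp M"
    and "urysohn_katetov M TYPE('a)"
    and "iso_subgroup G"
    and "\<exists>D\<subseteq>G. G \<subseteq> closure D \<and> (card_of D, card_of M) \<in> ordLess"
  shows "(\<forall>x e. e > 0 \<longrightarrow>
            (\<exists>W. openin (top_of_set G) W \<and> id \<in> W \<and> W \<subseteq> Vnb x e \<inter> G))
       \<and> (\<forall>W. openin (top_of_set G) W \<and> id \<in> W \<longrightarrow>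
            (\<exists>x e. e > 0 \<and> Vnb x e \<inter> G \<subseteq> W))"
proof (intro conjI)
  have GI: "G \<subseteq> Iso" using assms(3) by (simp add: iso_subgroup_def)
  show "\<forall>x e. e > 0 \<longrightarrow>
            (\<exists>W. openin (top_of_set G) W \<and> id \<in> W \<and> W \<subseteq> Vnb x e \<inter> G)"
  proof (intro allI impI)
    fix x :: 'a and e :: real assume e: "e > 0"
    define U where "U = {f::'a\<Rightarrow>'a. \<forall>i\<in>{x}. f (id i) \<in> ball x e}"
    have oU: "open U" unfolding U_def by (rule product_topology_basis') auto
    show "\<exists>W. openin (top_of_set G) W \<and> id \<in> W \<and> W \<subseteq> Vnb x e \<inter> G"
    proof (intro exI conjI)
      show "openin (top_of_set G) (G \<inter> U)" using oU by (auto simp: openin_open)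
      show "id \<in> G \<inter> U" using assms(3) e by (simp add: iso_subgroup_def U_def)
      show "G \<inter> U \<subseteq> Vnb x e \<inter> G" using GI by (auto simp: U_def Vnb_def)
    qed
  qed
  show "\<forall>W. openin (top_of_set G) W \<and> id \<in> W \<longrightarrow> (\<exists>x e. e > 0 \<and> Vnb x e \<inter> G \<subseteq> W)"
  proof (intro allI impI, elim conjE)
    fix W assume W: "openin (top_of_set G) W" "id \<in> W"
    obtain F \<epsilon> where F: "finite F" "\<epsilon> > 0" and FW: "\<forall>g\<in>G. (\<forall>y\<in>F. dist (g y) y < \<epsilon>) \<longrightarrow> g \<in> W"
      using open_nbhd_id[OF W] by blast
    show "\<exists>x e. e > 0 \<and> Vnb x e \<inter> G \<subseteq> W"
    proof (cases "F = {}")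
      case True
      then show ?thesis using FW by (intro exI[of _ undefined] exI[of _ 1]) auto
    next
      case False
      obtain ys where ys: "distinct ys" "set ys = F" using finite_distinct_list[OF F(1)] by blast
      define n where "n = length ys"
      have n1: "n \<ge> 1" using False ys by (cases ys) (auto simp: n_def)
      have yF: "\<And>i. i < n \<Longrightarrow> ys!i \<in> F" using ys by (auto simp: n_def)
      define P where "P = {dist a b | a b. a \<in> F \<and> b \<in> F \<and> a \<noteq> b}"
      have finP: "finite P"
      proof -
        have "P \<subseteq> (\<lambda>(a,b). dist a b) ` (F \<times> F)" by (auto simp: P_def)
        then show ?thesis using F(1) finite_subset by blast
      qed
      define \<mu> where "\<mu> = Min (insert 1 P)"
      have \<mu>pos: "\<mu> > 0" unfolding \<mu>_def using finP by (auto simp: Min_gr_iff P_def)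
      have \<mu>le: "\<And>a b. a\<in>F \<Longrightarrow> b\<in>F \<Longrightarrow> a\<noteq>b \<Longrightarrow> \<mu> \<le> dist a b"
        unfolding \<mu>_def using finP by (intro Min_le) (auto simp: P_def)
      define \<gamma> where "\<gamma> = \<mu> / (real n + 2)"
      have \<gamma>pos: "\<gamma> > 0" using \<mu>pos by (simp add: \<gamma>_def)
      have n\<gamma>: "real n * \<gamma> + \<gamma> < \<mu>"
      proof -
        have "\<mu> = (real n + 2) * \<gamma>" by (simp add: \<gamma>_def)
        then show ?thesis using \<gamma>pos by (simp add: algebra_simps)
      qed
      define C where "C = 1 + (\<Sum>a\<in>F. \<Sum>b\<in>F. dist a b)"
      have Cge: "dist a b + 1 \<le> C" if "a\<in>F" "b\<in>F" for a b
      proof -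
        have "dist a b \<le> (\<Sum>b\<in>F. dist a b)" using that F(1) by (intro member_le_sum) auto
        also have "\<dots> \<le> (\<Sum>a\<in>F. \<Sum>b\<in>F. dist a b)"
          using that F(1) by (intro member_le_sum[where f="\<lambda>a. \<Sum>b\<in>F. dist a b"]) (auto intro: sum_nonneg)
        finally show ?thesis by (simp add: C_def)
      qed
      have C1: "C \<ge> 1" unfolding C_def by (auto intro!: sum_nonneg)
      define c where "c i = C + real i * \<gamma>" for i :: nat
      have cge: "\<And>i. c i \<ge> C" using \<gamma>pos by (simp add: c_def)
      define f where "f z = Min ((\<lambda>i. c i + dist z (ys!i)) ` {..<n})" for z
      have fle: "\<And>z i. i < n \<Longrightarrow> f z \<le> c i + dist z (ys!i)" unfolding f_def by (intro Min_le) auto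
      have fex: "\<exists>i<n. f z = c i + dist z (ys!i)" for z
      proof -
        have "f z \<in> (\<lambda>i. c i + dist z (ys!i)) ` {..<n}" unfolding f_def using n1 by (intro Min_in) (auto simp: lessThan_empty_iff)
        then show ?thesis by auto
      qed
      have fpos: "f z > 0" for z
      proof -
        obtain i where "i < n" "f z = c i + dist z (ys!i)" using fex by blast
        then show ?thesis using cge[of i] C1 zero_le_dist[of z "ys!i"] by linarith
      qed
      have flip: "f z \<le> f w + dist z w" for z w
      proof -
        obtain i where i: "i < n" "f w = c i + dist w (ys!i)" using fex by blast
        have "f z \<le> c i + dist z (ys!i)" by (rule fle[OF i(1)])
        moreover have "dist z (ys!i) \<le> dist z w + dist w (ys!i)" by (rule dist_triangle)
        ultimately show ?thesis using i by linarith
      qed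
      have ftri: "dist z w \<le> f z + f w" for z w
      proof -
        obtain i where i: "i < n" "f z = c i + dist z (ys!i)" using fex by blast
        obtain j where j: "j < n" "f w = c j + dist w (ys!j)" using fex by blast
        have "dist z w \<le> dist z (ys!i) + dist (ys!i) w" by (rule dist_triangle)
        moreover have "dist (ys!i) w \<le> dist (ys!i) (ys!j) + dist (ys!j) w" by (rule dist_triangle)
        moreover have "dist (ys!i) (ys!j) + 1 \<le> C" using Cge yF i(1) j(1) by blast
        moreover have "dist (ys!j) w = dist w (ys!j)" by (rule dist_commute)
        ultimately show ?thesis using i j cge[of i] cge[of j] C1 by linarith
      qed
      obtain D where D: "D \<subseteq> G" "G \<subseteq> closure D" "|D| <o |M|" using assms(4) by blast
      have infM: "infinite M" using assms(1) by (simp add: cardinal_hyp_def)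
      define T where "T = (\<Union>y\<in>F. (\<lambda>h. h y) ` D) \<union> F"
      have Tc: "|T| <o |M|" unfolding T_def
      proof (rule card_of_Un_ordLess_infinite[OF infM])
        have "\<forall>y\<in>F. |(\<lambda>h. h y) ` D| <o |M|"
          using card_of_image D(3) ordLeq_ordLess_trans by blast
        then show "|\<Union>y\<in>F. (\<lambda>h. h y) ` D| <o |M|"
          by (rule finite_UN_less[OF F(1) infM])
        show "|F| <o |M|" by (rule card_finite_less[OF F(1) infM])
      qed
      obtain x where x: "\<forall>z\<in>T. dist x z = f z"
      proof -
        have "\<exists>x. \<forall>z\<in>T. dist x z = f z"
          by (rule realize[OF assms(2) infM Tc]) (simp_all add: fpos flip ftri)
        then show ?thesis using that by blast
      qed
      define \<delta> where "\<delta> = min (\<gamma>/4) (\<epsilon>/3)"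
      have \<delta>pos: "\<delta> > 0" using \<gamma>pos F(2) by (simp add: \<delta>_def)
      show ?thesis
      proof (intro exI conjI)
        show "\<delta> > 0" by (rule \<delta>pos)
        show "Vnb x \<delta> \<inter> G \<subseteq> W"
        proof
          fix g assume g: "g \<in> Vnb x \<delta> \<inter> G"
          then have gG: "g \<in> G" and gx: "dist x (g x) < \<delta>" by (auto simp: Vnb_def)
          obtain h where hD: "h \<in> D" and h: "\<forall>y\<in>insert x F. dist (h y) (g y) < \<delta>"
            using dense_approx[of g D "insert x F" \<delta>] D(2) gG F(1) \<delta>pos by auto
          have hI: "h \<in> Iso" using hD D(1) GI by auto
          then have hd: "\<And>a b. dist (h a) (h b) = dist a b" by (simp add: Iso_def)
          have hx: "dist x (h x) < 2*\<delta>"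
          proof -
            have "dist x (h x) \<le> dist x (g x) + dist (g x) (h x)" by (rule dist_triangle)
            moreover have "dist (g x) (h x) < \<delta>" using h by (simp add: dist_commute)
            ultimately show ?thesis using gx by linarith
          qed
          have key: "dist (h (ys!i)) (ys!i) < 2*\<delta>" if "i < n" for i
            using that
          proof (induction i rule: less_induct)
            case (less i)
            have yi: "ys!i \<in> F" using less.prems yF by simp
            have hyT: "h (ys!i) \<in> T" using yi hD by (auto simp: T_def)
            have yT: "ys!i \<in> T" using yi by (auto simp: T_def)
            have A1: "f (h (ys!i)) = dist x (h (ys!i))" using x hyT by simp
            have A2: "dist x (h (ys!i)) \<le> dist x (h x) + dist (h x) (h (ys!i))" by (rule dist_triangle)
            have A3: "dist (h x) (h (ys!i)) = f (ys!i)" using hd x yT by simp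
            have A4: "f (ys!i) \<le> c i" using fle[OF less.prems, of "ys!i"] by simp
            have A: "f (h (ys!i)) < c i + 2*\<delta>" using A1 A2 A3 A4 hx by linarith
            obtain j where j: "j < n" "f (h (ys!i)) = c j + dist (h (ys!i)) (ys!j)" using fex by blast
            consider "j = i" | "i < j" | "j < i" by linarith
            then show ?case
            proof cases
              case 1 then show ?thesis using A j by simp
            next
              case 2
              have "real j \<ge> real i + 1" using 2 by simp
              then have "real j * \<gamma> \<ge> (real i + 1) * \<gamma>" using \<gamma>pos by (intro mult_right_mono) auto
              then have "c j \<ge> c i + \<gamma>" by (simp add: c_def algebra_simps)
              moreover have "\<delta> \<le> \<gamma>/4" by (simp add: \<delta>_def)
              ultimately have False using A j zero_le_dist[of "h (ys!i)" "ys!j"] \<gamma>pos by linarith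
              then show ?thesis ..
            next
              case 3
              have IH: "dist (h (ys!j)) (ys!j) < 2*\<delta>" using less.IH[OF 3] j(1) by simp
              have neq: "ys!i \<noteq> ys!j" using ys(1) 3 less.prems j(1) by (simp add: nth_eq_iff_index_eq n_def)
              have mu: "\<mu> \<le> dist (ys!i) (ys!j)" using \<mu>le yF less.prems j(1) neq by blast
              have B1: "dist (ys!i) (ys!j) = dist (h (ys!i)) (h (ys!j))" by (simp add: hd)
              have B2: "dist (h (ys!i)) (h (ys!j)) \<le> dist (h (ys!i)) (ys!j) + dist (ys!j) (h (ys!j))" by (rule dist_triangle)
              have B3: "dist (ys!j) (h (ys!j)) = dist (h (ys!j)) (ys!j)" by (rule dist_commute)
              have "real i * \<gamma> \<le> real n * \<gamma>" using less.prems \<gamma>pos by (intro mult_right_mono) auto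
              moreover have "0 \<le> real j * \<gamma>" using \<gamma>pos by simp
              ultimately have cdiff: "c i - c j \<le> real n * \<gamma>" by (simp add: c_def)
              have "\<delta> \<le> \<gamma>/4" by (simp add: \<delta>_def)
              then have False using A j mu B1 B2 B3 IH cdiff n\<gamma> by linarith
              then show ?thesis ..
            qed
          qed
          have "\<forall>y\<in>F. dist (g y) y < \<epsilon>"
          proof
            fix y assume yF': "y \<in> F"
            then obtain i where i: "i < n" "y = ys!i" using ys by (metis in_set_conv_nth n_def)
            have "dist (g y) y \<le> dist (g y) (h y) + dist (h y) y" by (rule dist_triangle)
            moreover have "dist (g y) (h y) < \<delta>" using h yF' by (simp add: dist_commute)
            moreover have "dist (h y) y < 2*\<delta>" using key[OF i(1)] i(2) by simp
            moreover have "\<delta> \<le> \<epsilon>/3" by (simp add: \<delta>_def)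
            ultimately show "dist (g y) y < \<epsilon>" by linarith
          qed
          then show "g \<in> W" using FW gG by blast
        qed
      qed
    qed
  qed
qed

end
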